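(* Let $\alpha\in(0,1)$ and let $(\eta_t)_{t\ge1}$, $(\gamma_t)_{t\ge1}$ be non-increasing sequences of positive learning rates and exploration factors with $\eta_t\le2\gamma_t$. With probability at least $1-\delta$, FTARL with the $\alpha$-Tsallis entropy regularizer guarantees $$\max_{a\in[K]}\mathrm{Regret}(a)\le\frac{K^{1-\alpha}-1}{\eta_T(1-\alpha)}+\frac{\ln(3K/\delta)}{2\gamma_T}+\Big(\frac1{2\alpha}+\frac12\Big)\ln(3/\delta)+\sum_{t=1}^T\Big(\frac{\eta_t}{2\alpha}+\gamma_t\Big)A_t.$$
   Context: Sleeping bandits with $K\ge2$ arms: in round $t$ an adaptive adversary reveals $\mathbb A_t\subseteq[K]$ ($A_t=|\mathbb A_t|$) and selects losses $\ell_{i,t}\in[0,1]$; the learner pulls $i_t\in\mathbb A_t$ and observes $\hat\ell_t=\ell_{i_t,t}$. With $I_{i,t}=\mathbb 1\{i\in\mathbb A_t\}$, $\mathrm{Regret}(a)=\sum_{t=1}^TI_{a,t}(\ell_{i_t,t}-\ell_{a,t})$. FTARL: $\psi(x)=\frac{1-\sum_{i=1}^Kx_i^\alpha}{1-\alpha}$, $\psi_t(q)=\frac{\psi(q)-\min_{v\in\Delta_K}\psi(v)}{\eta_t}$, $\Delta_K$ the probability simplex; $\tilde L_{i,0}=0$; in round $t$, $q_t=\arg\min_{q\in\Delta_K}\psi_t(q)+\langle q,\tilde L_{t-1}\rangle$, $p_{i,t}=\frac{I_{i,t}q_{i,t}}{\sum_jI_{j,t}q_{j,t}}$, draw $i_t\sim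 p_t$; $\tilde\ell_{i,t}=\frac{\mathbb 1\{i_t=i\}\hat\ell_t}{p_{i,t}+\gamma_t}$ for active $i$, $\tilde\ell_{i,t}=\hat\ell_t-\gamma_t\sum_{j\in\mathbb A_t}\tilde\ell_{j,t}$ for inactive $i$; $\tilde L_{i,t}=\tilde L_{i,t-1}+\tilde\ell_{i,t}$. *)

theory Defs
  imports Complex_Main
begin

text \<open>Arms are 0,...,K-1. Rounds are 1-based: eta t, gamma t for t >= 1.
  Histories of pulled arms are stored in REVERSE order (most recent first);
  a history h of length t-1 is the information available before round t.
  The adaptive adversary is given by Act h (active set of round t) and
  loss h i (loss of arm i in round t), both functions of the past pulls h.\<close>

definition simplex :: "nat \<Rightarrow> (nat \<Rightarrow> real) set" where
  "simplex K = {q. (\<forall>i. 0 \<le> q i) \<and> (\<forall>i. K \<le> i \<longrightarrow> q i = 0) \<and> (\<Sum>i<K. q i) = 1}"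

definition tsallis :: "real \<Rightarrow> nat \<Rightarrow> (nat \<Rightarrow> real) \<Rightarrow> real" where
  "tsallis \<alpha> K x = (1 - (\<Sum>i<K. x i powr \<alpha>)) / (1 - \<alpha>)"

definition reg :: "real \<Rightarrow> nat \<Rightarrow> real \<Rightarrow> (nat \<Rightarrow> real) \<Rightarrow> real" where
  "reg \<alpha> K \<eta> q = (tsallis \<alpha> K q - (INF v\<in>simplex K. tsallis \<alpha> K v)) / \<eta>"

definition ftarl_q :: "real \<Rightarrow> nat \<Rightarrow> real \<Rightarrow> (nat \<Rightarrow> real) \<Rightarrow> (nat \<Rightarrow> real)" where
  "ftarl_q \<alpha> K \<eta> L = (SOME q. q \<in> simplex K \<and>
     (\<forall>v\<in>simplex K. reg \<alpha> K \<eta> q + (\<Sum>i<K. q i * L i) \<le> reg \<alpha> K \<eta> v + (\<Sum>i<K. v i * L i)))"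

definition ftarl_p :: "nat set \<Rightarrow> (nat \<Rightarrow> real) \<Rightarrow> nat \<Rightarrow> real" where
  "ftarl_p A q i = (if i \<in> A then q i else 0) / (\<Sum>j\<in>A. q j)"

definition ltil_act :: "(nat \<Rightarrow> real) \<Rightarrow> real \<Rightarrow> nat \<Rightarrow> real \<Rightarrow> nat \<Rightarrow> real" where
  "ltil_act p \<gamma> i0 lhat i = (if i = i0 then lhat / (p i + \<gamma>) else 0)"

definition ltil :: "(nat \<Rightarrow> real) \<Rightarrow> real \<Rightarrow> nat set \<Rightarrow> nat \<Rightarrow> real \<Rightarrow> nat \<Rightarrow> real" where
  "ltil p \<gamma> A i0 lhat i = (if i \<in> A then ltil_act p \<gamma> i0 lhat i
      else lhat - \<gamma> * (\<Sum>j\<in>A. ltil_act p \<gamma> i0 lhat j))"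

definition round_p :: "real \<Rightarrow> nat \<Rightarrow> (nat \<Rightarrow> real) \<Rightarrow> (nat list \<Rightarrow> nat set) \<Rightarrow> nat list
     \<Rightarrow> (nat \<Rightarrow> real) \<Rightarrow> nat \<Rightarrow> real" where
  "round_p \<alpha> K eta Act h L = ftarl_p (Act h) (ftarl_q \<alpha> K (eta (Suc (length h))) L)"

primrec Lcum :: "real \<Rightarrow> nat \<Rightarrow> (nat \<Rightarrow> real) \<Rightarrow> (nat \<Rightarrow> real) \<Rightarrow> (nat list \<Rightarrow> nat set)
     \<Rightarrow> (nat list \<Rightarrow> nat \<Rightarrow> real) \<Rightarrow> nat list \<Rightarrow> nat \<Rightarrow> real" where
  "Lcum \<alpha> K eta gamma Act loss [] = (\<lambda>i. 0)"
| "Lcum \<alpha> K eta gamma Act loss (j # h) =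
     (let L = Lcum \<alpha> K eta gamma Act loss h;
          p = round_p \<alpha> K eta Act h L;
          t = Suc (length h)
      in (\<lambda>i. L i + ltil p (gamma t) (Act h) j (loss h j) i))"

definition prob_arm :: "real \<Rightarrow> nat \<Rightarrow> (nat \<Rightarrow> real) \<Rightarrow> (nat \<Rightarrow> real) \<Rightarrow> (nat list \<Rightarrow> nat set)
     \<Rightarrow> (nat list \<Rightarrow> nat \<Rightarrow> real) \<Rightarrow> nat list \<Rightarrow> nat \<Rightarrow> real" where
  "prob_arm \<alpha> K eta gamma Act loss h = round_p \<alpha> K eta Act h (Lcum \<alpha> K eta gamma Act loss h)"

primrec ftarl_weight :: "real \<Rightarrow> nat \<Rightarrow> (nat \<Rightarrow> real) \<Rightarrow> (nat \<Rightarrow> real) \<Rightarrow> (nat list \<Rightarrow> nat set)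
     \<Rightarrow> (nat list \<Rightarrow> nat \<Rightarrow> real) \<Rightarrow> nat list \<Rightarrow> real" where
  "ftarl_weight \<alpha> K eta gamma Act loss [] = 1"
| "ftarl_weight \<alpha> K eta gamma Act loss (j # h) =
     ftarl_weight \<alpha> K eta gamma Act loss h * prob_arm \<alpha> K eta gamma Act loss h j"

definition hist_prob :: "nat \<Rightarrow> nat \<Rightarrow> (nat list \<Rightarrow> real) \<Rightarrow> (nat list \<Rightarrow> bool) \<Rightarrow> real" where
  "hist_prob K T w P = (\<Sum>H\<in>{H. length H = T \<and> set H \<subseteq> {..<K}}. w H * (if P H then 1 else 0))"

primrec regret :: "(nat list \<Rightarrow> nat set) \<Rightarrow> (nat list \<Rightarrow> nat \<Rightarrow> real) \<Rightarrow> nat \<Rightarrow> nat list \<Rightarrow> real" where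
  "regret Act loss a [] = 0"
| "regret Act loss a (j # h) = regret Act loss a h + (if a \<in> Act h then loss h j - loss h a else 0)"

primrec bonus :: "real \<Rightarrow> (nat \<Rightarrow> real) \<Rightarrow> (nat \<Rightarrow> real) \<Rightarrow> (nat list \<Rightarrow> nat set) \<Rightarrow> nat list \<Rightarrow> real" where
  "bonus \<alpha> eta gamma Act [] = 0"
| "bonus \<alpha> eta gamma Act (j # h) = bonus \<alpha> eta gamma Act h
     + (eta (Suc (length h)) / (2 * \<alpha>) + gamma (Suc (length h))) * real (card (Act h))"

end

theory Submission
  imports Defs "HOL-Analysis.Convex"
begin


lemma bern:
  fixes t b :: real
  assumes "0 \<le> t" "0 < b" "b < 1"
  shows "t powr b \<le> 1 + b * (t - 1)"
proof (cases "t = 0")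
  case True then show ?thesis using assms by simp
next
  case False
  then have "t > 0" using assms by simp
  have "t powr b * 1 powr (1 - b) \<le> b * t + (1 - b) * 1"
    by (rule Youngs_inequality_0) (use assms \<open>t>0\<close> in auto)
  then show ?thesis by (simp add: algebra_simps)
qed

lemma k2:
  fixes t a :: real
  assumes "0 \<le> t" "0 < a" "a < 1"
  shows "0 \<le> 1 - t powr a - a * (1 - t)"
  using bern[OF assms] by (simp add: algebra_simps)

lemma k1_pos:
  fixes t a :: real
  assumes "0 < t" "t \<le> 1" "0 < a" "a < 1"
  shows "a * (1 - a) * (1 - t)^2 / 2 \<le> 1 - t powr a - a * (1 - t)"
proof -
  define G where "G = (\<lambda>s::real. 1 - s powr a - a * (1 - s) - a * (1 - a) * (1 - s)^2 / 2)"
  have "G 1 \<le> G t"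
  proof (rule DERIV_nonpos_imp_nonincreasing[OF assms(2)])
    fix s assume s: "t \<le> s" "s \<le> 1"
    then have sp: "s > 0" using assms by simp
    have D: "DERIV G s :> (- (a * s powr (a - 1)) + a + a * (1 - a) * (1 - s))"
      unfolding G_def using sp
      apply (auto intro!: derivative_eq_intros simp: power2_eq_square)
      apply (simp add: field_simps)
      done
    have b1: "s powr (1 - a) \<le> 1 - (1 - a) * (1 - s)"
      using bern[of s "1 - a"] sp assms by (simp add: algebra_simps)
    define z where "z = (1 - a) * (1 - s)"
    have z0a: "0 \<le> z" using s assms sp unfolding z_def by (auto intro: mult_nonneg_nonneg)
    have "(1 - a) * (1 - s) \<le> 1 - a" using mult_left_mono[of "1 - s" 1 "1 - a"] sp assms by simp
    then have z0b: "z < 1" unfolding z_def using assms by linarith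
    note z0 = z0a z0b
    have pp: "s powr (1 - a) > 0" using sp by simp
    have "s powr (a - 1) = 1 / s powr (1 - a)"
      using sp by (simp add: powr_minus_divide[symmetric] powr_minus)
    also have "\<dots> \<ge> 1 / (1 - z)"
      using b1 pp z0 unfolding z_def by (intro divide_left_mono) auto
    finally have "s powr (a - 1) \<ge> 1 / (1 - z)" .
    moreover have "1 / (1 - z) \<ge> 1 + z"
    proof -
      have "(1 + z) * (1 - z) \<le> 1" using z0 by (simp add: algebra_simps)
      then show ?thesis using z0 by (simp add: le_divide_eq)
    qed
    ultimately have "s powr (a - 1) \<ge> 1 + z" by linarith
    then have "a * (1 + z) \<le> a * s powr (a - 1)"
      using assms by (intro mult_left_mono) auto
    then have "- (a * s powr (a - 1)) + a + a * (1 - a) * (1 - s) \<le> 0"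
      unfolding z_def by (simp add: algebra_simps)
    with D show "\<exists>y. DERIV G s :> y \<and> y \<le> 0" by blast
  qed
  moreover have "G 1 = 0" unfolding G_def by simp
  ultimately show ?thesis unfolding G_def by simp
qed

lemma k1:
  fixes t a :: real
  assumes "0 \<le> t" "t \<le> 1" "0 < a" "a < 1"
  shows "a * (1 - a) * (1 - t)^2 / 2 \<le> 1 - t powr a - a * (1 - t)"
proof (cases "t = 0")
  case True
  have "(1 - a) * (a / 2) \<le> (1 - a) * 1" using assms by (intro mult_left_mono) auto
  then have "a * (1 - a) / 2 \<le> 1 - a" by (simp add: algebra_simps)
  then show ?thesis using True by simp
next
  case False then show ?thesis using k1_pos assms by simp
qed

lemma ln_lower:
  fixes x :: real assumes "0 \<le> x"
  shows "2 * x / (2 + x) \<le> ln (1 + x)"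
proof -
  define g where "g = (\<lambda>x::real. ln (1 + x) - 2 * x / (2 + x))"
  have "g 0 \<le> g x"
  proof (rule DERIV_nonneg_imp_nondecreasing[OF assms])
    fix s :: real assume s: "0 \<le> s" "s \<le> x"
    have D: "DERIV g s :> (1 / (1 + s) - 4 / (2 + s)^2)"
      unfolding g_def using s
      by (auto intro!: derivative_eq_intros simp: field_simps power2_eq_square)
    have "4 * (1 + s) \<le> (2 + s)^2" using s by (simp add: power2_eq_square algebra_simps)
    then have "4 / (2 + s)^2 \<le> 4 / (4 * (1 + s))"
      using s by (intro divide_left_mono) auto
    moreover have "4 / (4 * (1 + s)) = 1 / (1 + s)" using s by (simp add: field_simps)
    ultimately have "4 / (2 + s)^2 \<le> 1 / (1 + s)" by (rule ord_le_eq_trans)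
    with D show "\<exists>y. DERIV g s :> y \<and> y \<ge> 0" by force
  qed
  then show ?thesis unfolding g_def by simp
qed

lemma exp_ix:
  fixes p g w l :: real
  assumes "0 < p" "0 < g" "0 \<le> w" "w \<le> 2 * g" "0 \<le> l" "l \<le> 1"
  shows "exp (w * l / (p + g)) \<le> 1 + w * l / p"
proof -
  define x where "x = w * l / p"
  have x0: "0 \<le> x" unfolding x_def using assms by simp
  have "w * l \<le> w * 1" using assms by (intro mult_left_mono) auto
  then have wl: "w * l \<le> 2 * g" using assms by linarith
  have "w * l / (p + g) \<le> 2 * x / (2 + x)"
  proof -
    have "2 * x / (2 + x) = w * l / (p + w * l / 2)"
      unfolding x_def using assms by (simp add: field_simps)
    also have "\<dots> \<ge> w * l / (p + g)"
      using assms wl by (intro divide_left_mono) (auto intro!: mult_nonneg_nonneg add_pos_nonneg mult_pos_pos)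
    finally show ?thesis .
  qed
  also have "\<dots> \<le> ln (1 + x)" by (rule ln_lower[OF x0])
  finally have "exp (w * l / (p + g)) \<le> exp (ln (1 + x))" by simp
  then show ?thesis using x0 unfolding x_def by simp
qed


definition Dv :: "real \<Rightarrow> real \<Rightarrow> real \<Rightarrow> real \<Rightarrow> real" where
  "Dv a \<eta> y x = (x powr a - y powr a + a * x powr (a - 1) * (y - x)) / ((1 - a) * \<eta>)"

lemma hom:
  fixes a x y :: real
  assumes "0 < x" "0 \<le> y"
  shows "x powr a - y powr a + a * x powr (a - 1) * (y - x)
     = x powr a * (1 - (y / x) powr a - a * (1 - y / x))"
proof -
  have "(y / x) powr a = y powr a / x powr a" using assms by (simp add: powr_divide)
  moreover have "x powr (a - 1) = x powr a / x" using assms by (simp add: powr_diff)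
  ultimately show ?thesis using assms by (simp add: field_simps)
qed

lemma Dv_nonneg:
  assumes "0 < x" "0 \<le> y" "0 < a" "a < 1" "0 < \<eta>"
  shows "0 \<le> Dv a \<eta> y x"
proof -
  have "0 \<le> 1 - (y / x) powr a - a * (1 - y / x)" using k2[of "y/x" a] assms by simp
  then have "0 \<le> x powr a - y powr a + a * x powr (a - 1) * (y - x)"
    using hom[OF assms(1,2), of a] assms by simp
  then show ?thesis unfolding Dv_def using assms by simp
qed

lemma Dv_quad:
  assumes "0 < x" "0 \<le> y" "y \<le> x" "0 < a" "a < 1" "0 < \<eta>"
  shows "a * x powr (a - 2) * (x - y)^2 / (2 * \<eta>) \<le> Dv a \<eta> y x"
proof -
  have "a * (1 - a) * (1 - y / x)^2 / 2 \<le> 1 - (y / x) powr a - a * (1 - y / x)"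
    using k1[of "y/x" a] assms by simp
  then have "x powr a * (a * (1 - a) * (1 - y / x)^2 / 2) \<le> x powr a - y powr a + a * x powr (a - 1) * (y - x)"
    using hom[OF assms(1,2), of a] assms by (simp add: mult_left_mono)
  moreover have "x powr a * (a * (1 - a) * (1 - y / x)^2 / 2) = (1 - a) * (a * x powr (a - 2) * (x - y)^2 / 2)"
  proof -
    have "x powr a = x powr (a - 2) * x^2" using assms
      by (simp add: powr_diff power2_eq_square)
    moreover have "(1 - y / x)^2 = (x - y)^2 / x^2" using assms by (simp add: field_simps)
    ultimately show ?thesis using assms by (simp add: field_simps)
  qed
  ultimately have "(1 - a) * (a * x powr (a - 2) * (x - y)^2 / 2) \<le> x powr a - y powr a + a * x powr (a - 1) * (y - x)"
    by linarith
  have "a * x powr (a - 2) * (x - y)^2 / (2 * \<eta>) = ((1 - a) * (a * x powr (a - 2) * (x - y)^2 / 2)) / ((1 - a) * \<eta>)"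
    using assms by (simp add: field_simps)
  also have "\<dots> \<le> (x powr a - y powr a + a * x powr (a - 1) * (y - x)) / ((1 - a) * \<eta>)"
    by (rule divide_right_mono) (use \<open>(1 - a) * _ \<le> _\<close> assms in auto)
  finally show ?thesis unfolding Dv_def .
qed

lemma Dv_pos:
  assumes "0 < x" "0 \<le> y" "y < x" "0 < a" "a < 1" "0 < \<eta>"
  shows "0 < Dv a \<eta> y x"
proof -
  have "0 < a * x powr (a - 2) * (x - y)^2 / (2 * \<eta>)" using assms by simp
  moreover have "y \<le> x" using assms by simp
  ultimately show ?thesis using Dv_quad[of x y a \<eta>] assms by linarith
qed

lemma stab1:
  assumes "0 < x" "0 \<le> y" "0 \<le> l" "0 < a" "a < 1" "0 < \<eta>"
  shows "(x - y) * l - Dv a \<eta> y x \<le> \<eta> * x powr (2 - a) * l^2 / (2 * a)"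
proof (cases "y \<le> x")
  case True
  define m where "m = a * x powr (a - 2) / \<eta>"
  have m0: "m > 0" unfolding m_def using assms by simp
  have "(x - y) * l - Dv a \<eta> y x \<le> (x - y) * l - m * (x - y)^2 / 2"
    using Dv_quad[OF assms(1,2) True assms(4,5,6)] unfolding m_def by simp
  also have "\<dots> \<le> l^2 / (2 * m)"
  proof -
    have "0 \<le> (l - m * (x - y))^2" by simp
    then have "2 * m * ((x - y) * l) - m * (m * (x - y)^2) \<le> l^2"
      by (simp add: power2_eq_square algebra_simps)
    then show ?thesis using m0 by (simp add: field_simps power2_eq_square)
  qed
  also have "l^2 / (2 * m) = \<eta> * x powr (2 - a) * l^2 / (2 * a)"
  proof -
    have "x powr (2 - a) * x powr (a - 2) = 1" using assms by (simp flip: powr_add)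
    then show ?thesis unfolding m_def using assms by (simp add: field_simps)
  qed
  finally show ?thesis .
next
  case False
  have "(x - y) * l \<le> 0" using False assms by (simp add: mult_nonpos_nonneg)
  moreover have "0 \<le> Dv a \<eta> y x" using Dv_nonneg assms by simp
  moreover have "0 \<le> \<eta> * x powr (2 - a) * l^2 / (2 * a)" using assms by simp
  ultimately show ?thesis by linarith
qed


definition Fo :: "real \<Rightarrow> nat \<Rightarrow> real \<Rightarrow> (nat \<Rightarrow> real) \<Rightarrow> (nat \<Rightarrow> real) \<Rightarrow> real" where
  "Fo a K \<eta> L y = reg a K \<eta> y + (\<Sum>i<K. y i * L i)"

definition stat :: "real \<Rightarrow> nat \<Rightarrow> real \<Rightarrow> (nat \<Rightarrow> real) \<Rightarrow> (nat \<Rightarrow> real) \<Rightarrow> real \<Rightarrow> bool" where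
  "stat a K \<eta> L x lam \<longleftrightarrow> x \<in> simplex K \<and>
     (\<forall>i<K. 0 < x i \<and> a / ((1 - a) * \<eta>) * x i powr (a - 1) = L i + lam)"

locale ts =
  fixes a :: real and K :: nat
  assumes a0: "0 < a" and a1: "a < 1" and K1: "1 \<le> K"
begin

lemma simplexD:
  assumes "y \<in> simplex K"
  shows "\<And>i. 0 \<le> y i" "\<And>i. K \<le> i \<Longrightarrow> y i = 0" "(\<Sum>i<K. y i) = 1"
  using assms unfolding simplex_def by auto

lemma simplex_le1:
  assumes "y \<in> simplex K" shows "y i \<le> 1"
proof (cases "i < K")
  case True
  have "y i \<le> (\<Sum>j<K. y j)"
    using True simplexD[OF assms] by (intro member_le_sum) auto
  then show ?thesis using simplexD[OF assms] by simp
next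
  case False then show ?thesis using simplexD[OF assms] by simp
qed

lemma psum_le:
  assumes "y \<in> simplex K"
  shows "(\<Sum>i<K. y i powr a) \<le> real K powr (1 - a)"
proof -
  have Kp: "real K > 0" using K1 by simp
  have "\<And>i. (real K * y i) powr a \<le> 1 + a * (real K * y i - 1)"
    using bern[of _ a] simplexD[OF assms] a0 a1 Kp by simp
  then have "(\<Sum>i<K. (real K * y i) powr a) \<le> (\<Sum>i<K. 1 + a * (real K * y i - 1))"
    by (intro sum_mono) auto
  also have "\<dots> = real K" using simplexD(3)[OF assms]
    by (simp add: sum.distrib sum_subtractf sum_distrib_left[symmetric] algebra_simps)
  finally have "real K powr a * (\<Sum>i<K. y i powr a) \<le> real K"
    using simplexD[OF assms] Kp by (simp add: powr_mult sum_distrib_left)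
  then have "(\<Sum>i<K. y i powr a) \<le> real K / real K powr a"
    using Kp by (simp add: field_simps)
  also have "\<dots> = real K powr (1 - a)" using Kp by (simp add: powr_diff)
  finally show ?thesis .
qed

lemma tsallis_lb:
  assumes "y \<in> simplex K"
  shows "(1 - real K powr (1 - a)) / (1 - a) \<le> tsallis a K y"
  unfolding tsallis_def using psum_le[OF assms] a1 by (intro divide_right_mono) auto

lemma simplex_ne: "(\<lambda>i. if i = 0 then 1 else 0) \<in> simplex K"
  unfolding simplex_def using K1 by auto

lemma INF_ge: "(1 - real K powr (1 - a)) / (1 - a) \<le> (INF v\<in>simplex K. tsallis a K v)"
  using simplex_ne tsallis_lb by (intro cINF_greatest) auto

lemma INF_le:
  assumes "y \<in> simplex K" shows "(INF v\<in>simplex K. tsallis a K v) \<le> tsallis a K y"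
  using tsallis_lb assms by (intro cINF_lower) (auto intro!: bdd_belowI2)

lemma reg_nonneg:
  assumes "y \<in> simplex K" "0 < \<eta>" shows "0 \<le> reg a K \<eta> y"
  unfolding reg_def using INF_le[OF assms(1)] assms by simp

lemma reg_mono:
  assumes "y \<in> simplex K" "0 < \<eta>'" "\<eta>' \<le> \<eta>" shows "reg a K \<eta> y \<le> reg a K \<eta>' y"
  unfolding reg_def using INF_le[OF assms(1)] assms by (intro divide_left_mono) auto

lemma reg_vertex:
  assumes "i0 < K" "0 < \<eta>"
  shows "reg a K \<eta> (\<lambda>i. if i = i0 then 1 else 0) \<le> (real K powr (1 - a) - 1) / (\<eta> * (1 - a))"
proof -
  have "(\<Sum>i<K. (if i = i0 then 1 else 0 :: real) powr a) = (\<Sum>i<K. if i = i0 then 1 else 0)"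
    by (intro sum.cong) auto
  also have "\<dots> = 1" using assms by simp
  finally have "tsallis a K (\<lambda>i. if i = i0 then 1 else 0) = 0" unfolding tsallis_def by simp
  then have "reg a K \<eta> (\<lambda>i. if i = i0 then 1 else 0) = - (INF v\<in>simplex K. tsallis a K v) / \<eta>"
    unfolding reg_def by simp
  also have "\<dots> \<le> - ((1 - real K powr (1 - a)) / (1 - a)) / \<eta>"
    using INF_ge assms by (intro divide_right_mono) auto
  also have "\<dots> = (real K powr (1 - a) - 1) / (\<eta> * (1 - a))"
    using a1 assms by (simp add: field_simps)
  finally show ?thesis .
qed

lemma Breg:
  assumes st: "stat a K \<eta> L x lam" and y: "y \<in> simplex K" and eta: "0 < \<eta>"
  shows "Fo a K \<eta> L y - Fo a K \<eta> L x = (\<Sum>i<K. Dv a \<eta> (y i) (x i))"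
proof -
  have x: "x \<in> simplex K" and xi: "\<And>i. i < K \<Longrightarrow> 0 < x i \<and> a / ((1 - a) * \<eta>) * x i powr (a - 1) = L i + lam"
    using st unfolding stat_def by auto
  have c: "(1 - a) * \<eta> \<noteq> 0" using a1 eta by simp
  have "(\<Sum>i<K. Dv a \<eta> (y i) (x i)) =
     (\<Sum>i<K. (x i powr a - y i powr a) / ((1 - a) * \<eta>) + L i * (y i - x i) + lam * (y i - x i))"
  proof (intro sum.cong refl)
    fix i assume "i \<in> {..<K}"
    then have e: "a / ((1 - a) * \<eta>) * x i powr (a - 1) = L i + lam" using xi by auto
    have h1: "Dv a \<eta> (y i) (x i) = (x i powr a - y i powr a) / ((1 - a) * \<eta>) + (a / ((1 - a) * \<eta>) * x i powr (a - 1)) * (y i - x i)"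
      unfolding Dv_def add_divide_distrib by simp
    have h2: "(a / ((1 - a) * \<eta>) * x i powr (a - 1)) * (y i - x i) = L i * (y i - x i) + lam * (y i - x i)"
      unfolding e by (simp add: distrib_right)
    show "Dv a \<eta> (y i) (x i) = (x i powr a - y i powr a) / ((1 - a) * \<eta>) + L i * (y i - x i) + lam * (y i - x i)"
      using h1 h2 by linarith
  qed
  also have "\<dots> = ((\<Sum>i<K. x i powr a) - (\<Sum>i<K. y i powr a)) / ((1 - a) * \<eta>) + (\<Sum>i<K. L i * (y i - x i))
       + lam * ((\<Sum>i<K. y i) - (\<Sum>i<K. x i))"
    by (simp add: sum.distrib sum_subtractf sum_divide_distrib[symmetric] sum_distrib_left[symmetric] right_diff_distrib)
  also have "\<dots> = ((\<Sum>i<K. x i powr a) - (\<Sum>i<K. y i powr a)) / ((1 - a) * \<eta>) + (\<Sum>i<K. L i * (y i - x i))"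
    using simplexD(3)[OF x] simplexD(3)[OF y] by simp
  also have "\<dots> = Fo a K \<eta> L y - Fo a K \<eta> L x"
  proof -
    have t: "tsallis a K y - tsallis a K x = ((\<Sum>i<K. x i powr a) - (\<Sum>i<K. y i powr a)) / (1 - a)"
      unfolding tsallis_def by (simp add: diff_divide_distrib[symmetric])
    have r: "reg a K \<eta> y - reg a K \<eta> x = (tsallis a K y - tsallis a K x) / \<eta>"
      unfolding reg_def by (simp add: diff_divide_distrib[symmetric])
    have l: "(\<Sum>i<K. L i * (y i - x i)) = (\<Sum>i<K. y i * L i) - (\<Sum>i<K. x i * L i)"
      by (simp add: sum_subtractf[symmetric] algebra_simps)
    show ?thesis unfolding Fo_def using t r l by (simp add: mult.commute)
  qed
  finally show ?thesis by simp
qed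

end


context ts begin

lemma stat_exists:
  assumes eta: "0 < \<eta>"
  shows "\<exists>x lam. stat a K \<eta> L x lam"
proof -
  define c where "c = a / ((1 - a) * \<eta>)"
  have c0: "c > 0" unfolding c_def using a0 a1 eta by simp
  define m where "m = Min (L ` {..<K})"
  have "0 \<in> {..<K}" using K1 by simp
  then have Kne: "{..<K} \<noteq> {}" by auto
  obtain i0 where i0: "i0 < K" "L i0 = m"
  proof -
    have "m \<in> L ` {..<K}" unfolding m_def using Kne by (intro Min_in) auto
    then show ?thesis using that by auto
  qed
  have mle: "\<And>i. i < K \<Longrightarrow> m \<le> L i" unfolding m_def by simp
  define r where "r = 1 / (1 - a)"
  have r0: "r > 0" unfolding r_def using a1 by simp
  define g where "g = (\<lambda>lam. \<Sum>i<K. (c / (L i + lam)) powr r)"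
  define l0 where "l0 = c - m"
  define l1 where "l1 = c * real K powr (1 - a) - m"
  have Kp: "real K \<ge> 1" using K1 by simp
  have Kpow: "real K powr (1 - a) \<ge> 1" using Kp a1 by (simp add: ge_one_powr_ge_zero)
  have l01: "l0 \<le> l1" unfolding l0_def l1_def using c0 Kpow by (simp add: mult_le_cancel_left1)
  have pos: "\<And>i lam. i < K \<Longrightarrow> l0 \<le> lam \<Longrightarrow> c \<le> L i + lam"
    using mle unfolding l0_def by fastforce
  have cont: "continuous_on {l0..l1} g"
    unfolding g_def
  proof (intro continuous_on_sum ballI)
    fix i assume "i \<in> {..<K}"
    then have *: "\<And>lam. lam \<in> {l0..l1} \<Longrightarrow> L i + lam > 0" using pos c0 by force
    show "continuous_on {l0..l1} (\<lambda>lam. (c / (L i + lam)) powr r)"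
      by (intro continuous_intros) (use c0 * in \<open>force\<close>)+
  qed
  have g0: "1 \<le> g l0"
  proof -
    have "(c / (L i0 + l0)) powr r = 1" using i0 c0 unfolding l0_def by simp
    moreover have "(c / (L i0 + l0)) powr r \<le> g l0"
      unfolding g_def using i0 by (intro member_le_sum) auto
    ultimately show ?thesis by simp
  qed
  have g1: "g l1 \<le> 1"
  proof -
    have "g l1 \<le> (\<Sum>i<K. 1 / real K)"
      unfolding g_def
    proof (intro sum_mono)
      fix i assume "i \<in> {..<K}"
      then have "L i + l1 \<ge> c * real K powr (1 - a)" using mle unfolding l1_def by force
      have Lp1: "0 < L i + l1" using pos[of i l1] \<open>i \<in> {..<K}\<close> l01 c0 by force
      have "c / (L i + l1) \<le> c / (c * real K powr (1 - a))"
      proof -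
        have "0 < c * real K powr (1 - a)" using c0 Kpow K1 by (intro mult_pos_pos) auto
        then show ?thesis using \<open>L i + l1 \<ge> _\<close> c0
          by (intro divide_left_mono) (auto intro!: mult_pos_pos simp del: mult_pos_pos)
      qed
      also have "\<dots> = 1 / real K powr (1 - a)" using c0 by simp
      finally have "(c / (L i + l1)) powr r \<le> (1 / real K powr (1 - a)) powr r"
        using r0 c0 Lp1 by (intro powr_mono2) auto
      also have "\<dots> = 1 / real K" unfolding r_def using Kp a1
        by (simp add: powr_divide powr_powr)
      finally show "(c / (L i + l1)) powr r \<le> 1 / real K" .
    qed
    also have "\<dots> = 1" using Kp by simp
    finally show ?thesis .
  qed
  obtain lam where lam: "l0 \<le> lam" "lam \<le> l1" "g lam = 1"
    using IVT2'[of g l1 1 l0, OF g1 g0 l01 cont] by blast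
  define x where "x = (\<lambda>i. if i < K then (c / (L i + lam)) powr r else 0)"
  have Lp: "\<And>i. i < K \<Longrightarrow> 0 < L i + lam" using pos lam c0 by force
  have "x \<in> simplex K"
    unfolding simplex_def x_def using lam(3) unfolding g_def by auto
  moreover have "\<forall>i<K. 0 < x i \<and> a / ((1 - a) * \<eta>) * x i powr (a - 1) = L i + lam"
  proof (intro allI impI conjI)
    fix i assume i: "i < K"
    have "0 < L i + lam" using Lp[OF i] .
    then show "0 < x i" unfolding x_def using i c0 by simp
    have "x i powr (a - 1) = (c / (L i + lam)) powr (r * (a - 1))"
      unfolding x_def using i by (simp add: powr_powr)
    also have "r * (a - 1) = -1" unfolding r_def using a1 by (simp add: field_simps)
    also have "(c / (L i + lam)) powr (-1) = (L i + lam) / c"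
      using c0 Lp[OF i] by (simp add: powr_minus_divide)
    finally show "a / ((1 - a) * \<eta>) * x i powr (a - 1) = L i + lam"
      using c0 unfolding c_def[symmetric] by simp
  qed
  ultimately show ?thesis unfolding stat_def by blast
qed

lemma stat_min:
  assumes "stat a K \<eta> L x lam" "0 < \<eta>" "y \<in> simplex K"
  shows "Fo a K \<eta> L x \<le> Fo a K \<eta> L y"
proof -
  have "0 \<le> (\<Sum>i<K. Dv a \<eta> (y i) (x i))"
    using assms a0 a1 simplexD[OF assms(3)] unfolding stat_def
    by (intro sum_nonneg Dv_nonneg) auto
  then show ?thesis using Breg[OF assms(1,3,2)] by simp
qed

lemma ftarl_stat:
  assumes eta: "0 < \<eta>"
  shows "\<exists>lam. stat a K \<eta> L (ftarl_q a K \<eta> L) lam"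
proof -
  obtain x lam where st: "stat a K \<eta> L x lam" using stat_exists[OF eta] by blast
  have xs: "x \<in> simplex K" using st unfolding stat_def by simp
  have xp: "\<And>i. i < K \<Longrightarrow> 0 < x i" using st unfolding stat_def by simp
  define q where "q = ftarl_q a K \<eta> L"
  have "q \<in> simplex K \<and> (\<forall>v\<in>simplex K. reg a K \<eta> q + (\<Sum>i<K. q i * L i) \<le> reg a K \<eta> v + (\<Sum>i<K. v i * L i))"
    unfolding q_def ftarl_q_def
    by (rule someI[of _ x]) (use xs stat_min[OF st eta] in \<open>auto simp: Fo_def\<close>)
  then have qs: "q \<in> simplex K" and qmin: "Fo a K \<eta> L q \<le> Fo a K \<eta> L x"
    using xs unfolding Fo_def by auto
  have sumD: "(\<Sum>i<K. Dv a \<eta> (q i) (x i)) = Fo a K \<eta> L q - Fo a K \<eta> L x"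
    using Breg[OF st qs eta] by simp
  have Dnn: "\<And>i. i \<in> {..<K} \<Longrightarrow> 0 \<le> Dv a \<eta> (q i) (x i)"
    using xp simplexD[OF qs] a0 a1 eta by (auto intro!: Dv_nonneg)
  have "(\<Sum>i<K. Dv a \<eta> (q i) (x i)) = 0"
  proof -
    have "0 \<le> (\<Sum>i<K. Dv a \<eta> (q i) (x i))" by (rule sum_nonneg) (use Dnn in auto)
    then show ?thesis using sumD qmin by linarith
  qed
  then have D0': "\<forall>i\<in>{..<K}. Dv a \<eta> (q i) (x i) = 0"
    using sum_nonneg_eq_0_iff[of "{..<K}" "\<lambda>i. Dv a \<eta> (q i) (x i)"] Dnn by blast
  then have D0: "\<And>i. i < K \<Longrightarrow> Dv a \<eta> (q i) (x i) = 0" by auto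
  have ge: "\<And>i. i < K \<Longrightarrow> x i \<le> q i"
  proof (rule ccontr)
    fix i assume i: "i < K" and "\<not> x i \<le> q i"
    then have "0 < Dv a \<eta> (q i) (x i)"
      using xp[OF i] simplexD(1)[OF qs] a0 a1 eta by (intro Dv_pos) auto
    with D0[OF i] show False by simp
  qed
  have "(\<Sum>i<K. q i - x i) = 0" using simplexD(3)[OF qs] simplexD(3)[OF xs]
    by (simp add: sum_subtractf)
  then have "\<And>i. i < K \<Longrightarrow> q i - x i = 0"
    using sum_nonneg_eq_0_iff[of "{..<K}" "\<lambda>i. q i - x i"] ge by auto
  then have "q = x" using simplexD(2)[OF qs] simplexD(2)[OF xs]
    by (intro ext) (metis eq_iff_diff_eq_0 not_less)
  then show ?thesis using st unfolding q_def by blast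
qed

lemma stabK:
  assumes st: "stat a K \<eta> L q lam" and eta: "0 < \<eta>" and y: "y \<in> simplex K"
    and l: "\<And>i. i < K \<Longrightarrow> 0 \<le> l i"
  shows "(\<Sum>i<K. q i * l i) - \<eta> / (2 * a) * (\<Sum>i<K. q i powr (2 - a) * (l i)^2) + Fo a K \<eta> L q
     \<le> Fo a K \<eta> (\<lambda>i. L i + l i) y"
proof -
  have qp: "\<And>i. i < K \<Longrightarrow> 0 < q i" using st unfolding stat_def by simp
  have "(\<Sum>i<K. (q i - y i) * l i - Dv a \<eta> (y i) (q i)) \<le> (\<Sum>i<K. \<eta> * q i powr (2 - a) * (l i)^2 / (2 * a))"
    using qp simplexD(1)[OF y] l a0 a1 eta by (intro sum_mono stab1) auto
  moreover have "(\<Sum>i<K. \<eta> * q i powr (2 - a) * (l i)^2 / (2 * a)) = \<eta> / (2 * a) * (\<Sum>i<K. q i powr (2 - a) * (l i)^2)"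
    by (simp add: sum_distrib_left mult.assoc)
  moreover have "(\<Sum>i<K. (q i - y i) * l i - Dv a \<eta> (y i) (q i)) =
     (\<Sum>i<K. q i * l i) - (\<Sum>i<K. y i * l i) - (Fo a K \<eta> L y - Fo a K \<eta> L q)"
    using Breg[OF st y eta] by (simp add: sum_subtractf left_diff_distrib)
  moreover have "Fo a K \<eta> (\<lambda>i. L i + l i) y = Fo a K \<eta> L y + (\<Sum>i<K. y i * l i)"
    unfolding Fo_def by (simp add: distrib_left sum.distrib)
  ultimately show ?thesis by linarith
qed

end


primrec cum :: "(nat list \<Rightarrow> nat \<Rightarrow> real) \<Rightarrow> nat list \<Rightarrow> real" where
  "cum f [] = 0"
| "cum f (j # h) = cum f h + f h j"

primrec valid :: "(nat list \<Rightarrow> nat set) \<Rightarrow> nat list \<Rightarrow> bool" where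
  "valid Act [] = True"
| "valid Act (j # h) = (j \<in> Act h \<and> valid Act h)"

lemma cum_add: "cum (\<lambda>h j. f h j + g h j) H = cum f H + cum g H"
  by (induction H) auto
lemma cum_diff: "cum (\<lambda>h j. f h j - g h j) H = cum f H - cum g H"
  by (induction H) auto
lemma cum_scal: "cum (\<lambda>h j. c * f h j) H = c * cum f H"
  by (induction H) (auto simp: algebra_simps)
lemma cum_mono:
  assumes "valid Act H" "\<And>h j. j \<in> Act h \<Longrightarrow> f h j \<le> g h j"
  shows "cum f H \<le> cum g H"
  using assms by (induction H) (auto intro: add_mono)

definition Hs :: "nat \<Rightarrow> nat \<Rightarrow> nat list set" where
  "Hs K n = {H. length H = n \<and> set H \<subseteq> {..<K}}"

lemma Hs_finite: "finite (Hs K n)"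
  unfolding Hs_def using finite_lists_length_eq[of "{..<K}" n] by (simp add: conj_commute)

lemma Hs_sum_Suc:
  "(\<Sum>H\<in>Hs K (Suc n). f H) = (\<Sum>h\<in>Hs K n. \<Sum>j<K. f (j # h))"
proof -
  have e: "Hs K (Suc n) = (\<lambda>(xs, n). n # xs) ` (Hs K n \<times> {..<K})"
    unfolding Hs_def using lists_length_Suc_eq[of "{..<K}" n] by (simp add: conj_commute)
  have i: "inj_on (\<lambda>(xs, n). n # xs) (Hs K n \<times> {..<K})"
    by (auto simp: inj_on_def)
  show ?thesis unfolding e sum.reindex[OF i]
    by (subst sum.cartesian_product) (simp add: case_prod_beta)
qed

lemma hist_prob_Hs: "hist_prob K T w P = (\<Sum>H\<in>Hs K T. w H * (if P H then 1 else 0))"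
  unfolding hist_prob_def Hs_def by simp

locale setting = ts a K for a K +
  fixes eta gamma :: "nat \<Rightarrow> real" and Act :: "nat list \<Rightarrow> nat set"
    and loss :: "nat list \<Rightarrow> nat \<Rightarrow> real"
  assumes eta_pos: "\<And>t. 1 \<le> t \<Longrightarrow> 0 < eta t"
    and gamma_pos: "\<And>t. 1 \<le> t \<Longrightarrow> 0 < gamma t"
    and eta_mono: "\<And>t. 1 \<le> t \<Longrightarrow> eta (Suc t) \<le> eta t"
    and gamma_mono: "\<And>t. 1 \<le> t \<Longrightarrow> gamma (Suc t) \<le> gamma t"
    and eta_gamma: "\<And>t. 1 \<le> t \<Longrightarrow> eta t \<le> 2 * gamma t"
    and Act_sub: "\<And>h. Act h \<subseteq> {..<K}"
    and Act_ne: "\<And>h. Act h \<noteq> {}"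
    and loss0: "\<And>h i. i < K \<Longrightarrow> 0 \<le> loss h i"
    and loss1: "\<And>h i. i < K \<Longrightarrow> loss h i \<le> 1"
begin

definition "Lh h = Lcum a K eta gamma Act loss h"
definition eh :: "nat list \<Rightarrow> real" where "eh h = eta (Suc (length h))"
definition gh :: "nat list \<Rightarrow> real" where "gh h = gamma (Suc (length h))"
definition "qh h = ftarl_q a K (eh h) (Lh h)"
definition "ph h = prob_arm a K eta gamma Act loss h"
definition "Qh h = (\<Sum>i\<in>Act h. qh h i)"
definition "lt h j = ltil (ph h) (gh h) (Act h) j (loss h j)"
definition "Sh h j = (\<Sum>i\<in>Act h. ltil_act (ph h) (gh h) j (loss h j) i)"
abbreviation "w \<equiv> ftarl_weight a K eta gamma Act loss"

lemma eh_pos: "0 < eh h" unfolding eh_def using eta_pos by simp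
lemma gh_pos: "0 < gh h" unfolding gh_def using gamma_pos by simp
lemma eh_gh: "eh h \<le> 2 * gh h" unfolding eh_def gh_def using eta_gamma by simp

lemma Act_fin: "finite (Act h)"
  using Act_sub finite_subset by blast

lemma card_Act: "1 \<le> card (Act h)"
  using Act_fin Act_ne by (simp add: Suc_le_eq card_gt_0_iff)

lemma qh_stat: "\<exists>lam. stat a K (eh h) (Lh h) (qh h) lam"
  unfolding qh_def using ftarl_stat[OF eh_pos] by blast

lemma qh_simplex: "qh h \<in> simplex K"
  using qh_stat unfolding stat_def by blast

lemma qh_pos: "i < K \<Longrightarrow> 0 < qh h i"
  using qh_stat unfolding stat_def by blast

lemma qh_nonneg: "0 \<le> qh h i"
  using simplexD(1)[OF qh_simplex] .

lemma qh_le1: "qh h i \<le> 1"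
  using simplex_le1[OF qh_simplex] .

lemma Act_lt: "i \<in> Act h \<Longrightarrow> i < K"
  using Act_sub by blast

lemma Qh_pos: "0 < Qh h"
  unfolding Qh_def using Act_fin Act_ne
  by (intro sum_pos) (auto intro: qh_pos Act_lt)

lemma Qh_split: "Qh h + (\<Sum>i\<in>{..<K} - Act h. qh h i) = 1"
proof -
  have "(\<Sum>i<K. qh h i) = (\<Sum>i\<in>Act h. qh h i) + (\<Sum>i\<in>{..<K} - Act h. qh h i)"
    using Act_sub by (metis add.commute finite_lessThan sum.subset_diff)
  then show ?thesis using simplexD(3)[OF qh_simplex] unfolding Qh_def by simp
qed

lemma Qh_le1: "Qh h \<le> 1"
proof -
  have "0 \<le> (\<Sum>i\<in>{..<K} - Act h. qh h i)" by (intro sum_nonneg qh_nonneg)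
  then show ?thesis using Qh_split[of h] by linarith
qed

lemma ph_eq: "ph h i = (if i \<in> Act h then qh h i else 0) / Qh h"
  unfolding ph_def prob_arm_def round_p_def ftarl_p_def qh_def Qh_def eh_def Lh_def by simp

lemma ph_act: "i \<in> Act h \<Longrightarrow> ph h i = qh h i / Qh h"
  by (simp add: ph_eq)

lemma ph_nact: "i \<notin> Act h \<Longrightarrow> ph h i = 0"
  by (simp add: ph_eq)

lemma ph_nonneg: "0 \<le> ph h i"
  using Qh_pos[of h] qh_nonneg by (simp add: ph_eq)

lemma ph_pos: "i \<in> Act h \<Longrightarrow> 0 < ph h i"
  using Qh_pos[of h] qh_pos[of i h] Act_lt[of i h] by (auto simp: ph_act)

lemma q_le_p: "i \<in> Act h \<Longrightarrow> qh h i \<le> ph h i"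
  using Qh_pos[of h] Qh_le1[of h] qh_nonneg[of h i]
  by (simp add: ph_act divide_le_eq_1 le_divide_eq mult_left_le)

lemma ph_sum_act: "(\<Sum>j\<in>Act h. ph h j) = 1"
  using Qh_pos[of h] by (simp add: ph_act sum_divide_distrib[symmetric] Qh_def)

lemma ph_sum_K: "(\<Sum>j<K. f j * ph h j) = (\<Sum>j\<in>Act h. f j * ph h j)"
  using Act_sub by (intro sum.mono_neutral_right) (auto simp: ph_nact)

lemma ph_sum1: "(\<Sum>j<K. ph h j) = 1"
  using ph_sum_K[of "\<lambda>_. 1" h] ph_sum_act[of h] by simp

lemma Lh_Cons: "Lh (j # h) = (\<lambda>i. Lh h i + lt h j i)"
  unfolding Lh_def lt_def ph_def gh_def prob_arm_def by (simp add: Let_def)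

lemma w_Cons: "w (j # h) = w h * ph h j"
  unfolding ph_def by simp

lemma w_nonneg: "0 \<le> w H"
  by (induction H) (auto simp: ph_nonneg[unfolded ph_def])

lemma w_valid: "w H \<noteq> 0 \<Longrightarrow> valid Act H"
proof (induction H)
  case Nil then show ?case by simp
next
  case (Cons j h)
  then have "w h \<noteq> 0" "ph h j \<noteq> 0" unfolding w_Cons by auto
  then show ?case using Cons ph_nact by auto
qed

lemma supermart:
  assumes "\<And>h. length h < n \<Longrightarrow> (\<Sum>j<K. ph h j * exp (Y h j)) \<le> 1"
  shows "(\<Sum>H\<in>Hs K n. w H * exp (cum Y H)) \<le> 1"
  using assms
proof (induction n)
  case 0
  have "Hs K 0 = {[]}" unfolding Hs_def by auto
  then show ?case by simp
next
  case (Suc n)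
  have "(\<Sum>H\<in>Hs K (Suc n). w H * exp (cum Y H)) = (\<Sum>h\<in>Hs K n. \<Sum>j<K. w (j # h) * exp (cum Y (j # h)))"
    by (rule Hs_sum_Suc)
  also have "\<dots> = (\<Sum>h\<in>Hs K n. w h * exp (cum Y h) * (\<Sum>j<K. ph h j * exp (Y h j)))"
    by (intro sum.cong refl) (simp add: w_Cons exp_add sum_distrib_left algebra_simps del: ftarl_weight.simps)
  also have "\<dots> \<le> (\<Sum>h\<in>Hs K n. w h * exp (cum Y h) * 1)"
  proof (intro sum_mono mult_left_mono)
    fix h assume "h \<in> Hs K n"
    then have "length h < Suc n" unfolding Hs_def by simp
    then show "(\<Sum>j<K. ph h j * exp (Y h j)) \<le> 1" using Suc.prems by blast
    show "0 \<le> w h * exp (cum Y h)" using w_nonneg by simp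
  qed
  also have "\<dots> \<le> 1" using Suc by simp
  finally show ?case .
qed

lemma total_w: "(\<Sum>H\<in>Hs K n. w H) = 1"
proof (induction n)
  case 0
  have "Hs K 0 = {[]}" unfolding Hs_def by auto
  then show ?case by simp
next
  case (Suc n)
  have "(\<Sum>H\<in>Hs K (Suc n). w H) = (\<Sum>h\<in>Hs K n. \<Sum>j<K. w (j # h))"
    by (rule Hs_sum_Suc)
  also have "\<dots> = (\<Sum>h\<in>Hs K n. w h * (\<Sum>j<K. 1 * ph h j))"
    by (intro sum.cong refl) (simp add: w_Cons sum_distrib_left del: ftarl_weight.simps)
  also have "\<dots> = (\<Sum>h\<in>Hs K n. w h)"
    by (intro sum.cong refl) (simp add: ph_sum1)
  finally show ?case using Suc by simp
qed

lemma markov: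
  assumes "\<And>h. length h < n \<Longrightarrow> (\<Sum>j<K. ph h j * exp (Y h j)) \<le> 1"
  shows "hist_prob K n w (\<lambda>H. c \<le> cum Y H) \<le> exp (- c)"
proof -
  have "hist_prob K n w (\<lambda>H. c \<le> cum Y H) \<le> (\<Sum>H\<in>Hs K n. exp (- c) * (w H * exp (cum Y H)))"
    unfolding hist_prob_Hs
  proof (intro sum_mono)
    fix H
    have "(if c \<le> cum Y H then 1 else 0) \<le> exp (cum Y H - c)" by auto
    then have "w H * (if c \<le> cum Y H then 1 else 0) \<le> w H * exp (cum Y H - c)"
      using w_nonneg by (intro mult_left_mono) auto
    then show "w H * (if c \<le> cum Y H then 1 else 0) \<le> exp (- c) * (w H * exp (cum Y H))"
      by (simp add: exp_diff exp_minus field_simps)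
  qed
  also have "\<dots> = exp (- c) * (\<Sum>H\<in>Hs K n. w H * exp (cum Y H))"
    by (simp add: sum_distrib_left)
  also have "\<dots> \<le> exp (- c) * 1"
    using supermart[OF assms] by (intro mult_left_mono) auto
  finally show ?thesis by simp
qed

end


context setting begin

definition Yw :: "(nat list \<Rightarrow> nat \<Rightarrow> real) \<Rightarrow> nat list \<Rightarrow> nat \<Rightarrow> real" where
  "Yw wt h j = (\<Sum>i\<in>Act h. wt h i * (ltil_act (ph h) (gh h) j (loss h j) i - loss h i))"

lemma loss_act0: "i \<in> Act h \<Longrightarrow> 0 \<le> loss h i" using loss0 Act_lt by blast
lemma loss_act1: "i \<in> Act h \<Longrightarrow> loss h i \<le> 1" using loss1 Act_lt by blast

lemma sum_delta_act:
  assumes "j \<in> Act h"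
  shows "(\<Sum>i\<in>Act h. f i * ltil_act (ph h) (gh h) j (loss h j) i) = f j * (loss h j / (ph h j + gh h))"
proof -
  have "(\<Sum>i\<in>Act h. f i * ltil_act (ph h) (gh h) j (loss h j) i)
      = (\<Sum>i\<in>Act h. if i = j then f j * (loss h j / (ph h j + gh h)) else 0)"
    by (intro sum.cong refl) (simp add: ltil_act_def)
  also have "\<dots> = f j * (loss h j / (ph h j + gh h))" using assms Act_fin by simp
  finally show ?thesis .
qed

lemma Yw_eq:
  assumes "j \<in> Act h"
  shows "Yw wt h j = wt h j * loss h j / (ph h j + gh h) - (\<Sum>i\<in>Act h. wt h i * loss h i)"
proof -
  have "Yw wt h j = (\<Sum>i\<in>Act h. wt h i * ltil_act (ph h) (gh h) j (loss h j) i) - (\<Sum>i\<in>Act h. wt h i * loss h i)"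
    unfolding Yw_def by (simp add: right_diff_distrib sum_subtractf)
  then show ?thesis using sum_delta_act[OF assms, of "wt h"] by simp
qed

lemma neu_round:
  assumes wt: "\<And>i. i \<in> Act h \<Longrightarrow> 0 \<le> wt h i \<and> wt h i \<le> 2 * gh h"
  shows "(\<Sum>j<K. ph h j * exp (Yw wt h j)) \<le> 1"
proof -
  define B where "B = (\<Sum>i\<in>Act h. wt h i * loss h i)"
  have "(\<Sum>j<K. ph h j * exp (Yw wt h j)) = (\<Sum>j\<in>Act h. exp (Yw wt h j) * ph h j)"
    using ph_sum_K[of "\<lambda>j. exp (Yw wt h j)" h] by (simp add: mult.commute)
  also have "\<dots> \<le> (\<Sum>j\<in>Act h. (ph h j + wt h j * loss h j) * exp (- B))"
  proof (intro sum_mono)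
    fix j assume j: "j \<in> Act h"
    have p: "0 < ph h j" using ph_pos[OF j] .
    have "exp (Yw wt h j) = exp (wt h j * loss h j / (ph h j + gh h)) * exp (- B)"
      unfolding Yw_eq[OF j] B_def by (simp add: exp_diff exp_minus field_simps)
    also have "\<dots> \<le> (1 + wt h j * loss h j / ph h j) * exp (- B)"
      using wt[OF j] p gh_pos loss_act0[OF j] loss_act1[OF j]
      by (intro mult_right_mono exp_ix) auto
    finally have "exp (Yw wt h j) * ph h j \<le> (1 + wt h j * loss h j / ph h j) * exp (- B) * ph h j"
      using p by (intro mult_right_mono) auto
    also have "\<dots> = (ph h j + wt h j * loss h j) * exp (- B)"
      using p by (simp add: field_simps)
    finally show "exp (Yw wt h j) * ph h j \<le> (ph h j + wt h j * loss h j) * exp (- B)" .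
  qed
  also have "\<dots> = (1 + B) * exp (- B)"
    unfolding B_def by (simp add: sum_distrib_right[symmetric] sum.distrib ph_sum_act)
  also have "\<dots> \<le> exp B * exp (- B)"
    using exp_ge_add_one_self[of B] by (intro mult_right_mono) auto
  also have "\<dots> = 1" by (simp add: exp_minus)
  finally show ?thesis .
qed

lemma lt_act: "i \<in> Act h \<Longrightarrow> lt h j i = ltil_act (ph h) (gh h) j (loss h j) i"
  unfolding lt_def ltil_def by simp

lemma Sh_eq: "j \<in> Act h \<Longrightarrow> Sh h j = loss h j / (ph h j + gh h)"
  unfolding Sh_def using sum_delta_act[of j h "\<lambda>_. 1"] by simp

lemma lt_nact: "i \<notin> Act h \<Longrightarrow> lt h j i = loss h j - gh h * Sh h j"
  unfolding lt_def ltil_def Sh_def by simp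

lemma Sh_nonneg: "j \<in> Act h \<Longrightarrow> 0 \<le> Sh h j"
  using Sh_eq loss_act0 ph_pos gh_pos[of h] by (simp add: add_pos_pos less_imp_le)

lemma gS_le: "j \<in> Act h \<Longrightarrow> gh h * Sh h j \<le> loss h j"
proof -
  assume j: "j \<in> Act h"
  have "gh h * Sh h j = loss h j * (gh h / (ph h j + gh h))"
    using Sh_eq[OF j] by (simp add: field_simps)
  also have "\<dots> \<le> loss h j * 1"
    using ph_pos[OF j] gh_pos[of h] loss_act0[OF j] by (intro mult_left_mono) auto
  finally show ?thesis by simp
qed

lemma lt_nonneg: "j \<in> Act h \<Longrightarrow> 0 \<le> lt h j i"
proof (cases "i \<in> Act h")
  case True
  assume j: "j \<in> Act h"
  then show ?thesis using True lt_act[OF True] loss_act0[OF j] ph_pos[OF j] gh_pos[of h]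
    by (simp add: ltil_act_def add_pos_pos less_imp_le)
next
  case False
  assume j: "j \<in> Act h"
  then show ?thesis using lt_nact[OF False] gS_le[OF j] by simp
qed

lemma lt_nact_le1: "j \<in> Act h \<Longrightarrow> i \<notin> Act h \<Longrightarrow> lt h j i \<le> 1"
proof -
  assume j: "j \<in> Act h" and i: "i \<notin> Act h"
  have "0 \<le> gh h * Sh h j" using gh_pos[of h] Sh_nonneg[OF j] by simp
  then show ?thesis using lt_nact[OF i, of j] loss_act1[OF j] by linarith
qed

lemma lin_eq:
  assumes j: "j \<in> Act h"
  shows "(\<Sum>i<K. qh h i * lt h j i) = loss h j - gh h * Sh h j"
proof -
  have split: "(\<Sum>i<K. qh h i * lt h j i) = (\<Sum>i\<in>Act h. qh h i * lt h j i) + (\<Sum>i\<in>{..<K} - Act h. qh h i * lt h j i)"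
    using sum.subset_diff[OF Act_sub[of h] finite_lessThan, of "\<lambda>i. qh h i * lt h j i"] by (simp add: add.commute)
  have a: "(\<Sum>i\<in>Act h. qh h i * lt h j i) = qh h j * (loss h j / (ph h j + gh h))"
  proof -
    have "(\<Sum>i\<in>Act h. qh h i * lt h j i) = (\<Sum>i\<in>Act h. qh h i * ltil_act (ph h) (gh h) j (loss h j) i)"
      by (intro sum.cong refl) (simp add: lt_act)
    then show ?thesis using sum_delta_act[OF j, of "qh h"] by simp
  qed
  have b: "(\<Sum>i\<in>{..<K} - Act h. qh h i * lt h j i) = (1 - Qh h) * (loss h j - gh h * Sh h j)"
  proof -
    have "(\<Sum>i\<in>{..<K} - Act h. qh h i * lt h j i) = (\<Sum>i\<in>{..<K} - Act h. qh h i) * (loss h j - gh h * Sh h j)"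
    proof -
      have "(\<Sum>i\<in>{..<K} - Act h. qh h i * lt h j i) = (\<Sum>i\<in>{..<K} - Act h. qh h i * (loss h j - gh h * Sh h j))"
        by (intro sum.cong refl) (simp add: lt_nact)
      then show ?thesis by (simp add: sum_distrib_right)
    qed
    moreover have "(\<Sum>i\<in>{..<K} - Act h. qh h i) = 1 - Qh h" using Qh_split[of h] by simp
    ultimately show ?thesis by simp
  qed
  have q: "qh h j = Qh h * ph h j" using ph_act[OF j] Qh_pos[of h] by simp
  have pg: "ph h j + gh h > 0" using ph_pos[OF j] gh_pos[of h] by simp
  have "qh h j * (loss h j / (ph h j + gh h)) + Qh h * (gh h * (loss h j / (ph h j + gh h)))
      = Qh h * ((ph h j + gh h) * (loss h j / (ph h j + gh h)))"
    unfolding q by (simp add: algebra_simps add_divide_distrib)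
  also have "(ph h j + gh h) * (loss h j / (ph h j + gh h)) = loss h j" using pg by simp
  finally have "qh h j * (loss h j / (ph h j + gh h)) + Qh h * (gh h * Sh h j) = Qh h * loss h j"
    unfolding Sh_eq[OF j] .
  then show ?thesis unfolding split a b by (simp add: algebra_simps)
qed

end


context setting begin

definition "lin h j = (\<Sum>i<K. qh h i * lt h j i)"
definition "stb h j = eh h / (2 * a) * (\<Sum>i<K. qh h i powr (2 - a) * (lt h j i)^2)"

lemma Lh_Nil: "Lh [] = (\<lambda>i. 0)" unfolding Lh_def by simp

lemma reg_q_nonneg: "0 \<le> reg a K (eh h) (qh h)"
  using reg_nonneg[OF qh_simplex eh_pos] .

lemma ftrl_cum:
  "valid Act (j # h) \<Longrightarrow> u \<in> simplex K \<Longrightarrow>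
     cum lin (j # h) - cum stb (j # h) \<le> Fo a K (eh h) (Lh (j # h)) u"
proof (induction h arbitrary: j u)
  case Nil
  have pre: "cum lin [] - cum stb [] \<le> Fo a K (eh []) (Lh []) (qh [])"
    using reg_q_nonneg[of "[]"] unfolding Fo_def Lh_Nil by simp
  obtain lam where st: "stat a K (eh []) (Lh []) (qh []) lam" using qh_stat by blast
  have "lin [] j - stb [] j + Fo a K (eh []) (Lh []) (qh []) \<le> Fo a K (eh []) (\<lambda>i. Lh [] i + lt [] j i) u"
    using stabK[OF st eh_pos Nil.prems(2), of "lt [] j"] lt_nonneg Nil.prems(1)
    unfolding lin_def stb_def by auto
  then show ?case using pre unfolding Lh_Cons by simp
next
  case (Cons j' h')
  define h where "h = j' # h'"
  have vj: "j \<in> Act h" and vh: "valid Act h" using Cons.prems unfolding h_def by auto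
  have IH: "cum lin h - cum stb h \<le> Fo a K (eh h') (Lh h) (qh h)"
    using Cons.IH[of j' "qh h"] vh qh_simplex unfolding h_def by auto
  have em: "eh h \<le> eh h'" unfolding h_def eh_def using eta_mono[of "Suc (length h')"] by simp
  have "Fo a K (eh h') (Lh h) (qh h) \<le> Fo a K (eh h) (Lh h) (qh h)"
    unfolding Fo_def using reg_mono[OF qh_simplex eh_pos em] by simp
  with IH have pre: "cum lin h - cum stb h \<le> Fo a K (eh h) (Lh h) (qh h)" by simp
  obtain lam where st: "stat a K (eh h) (Lh h) (qh h) lam" using qh_stat by blast
  have "lin h j - stb h j + Fo a K (eh h) (Lh h) (qh h) \<le> Fo a K (eh h) (\<lambda>i. Lh h i + lt h j i) u"
    using stabK[OF st eh_pos Cons.prems(2), of "lt h j"] lt_nonneg vj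
    unfolding lin_def stb_def by auto
  then show ?case using pre unfolding Lh_Cons h_def[symmetric] by simp
qed

lemma regret_cum: "regret Act loss b H = cum (\<lambda>h j. if b \<in> Act h then loss h j - loss h b else 0) H"
  by (induction H) auto

lemma Lh_cum: "Lh H i = cum (\<lambda>h j. lt h j i) H"
  by (induction H) (auto simp: Lh_Nil Lh_Cons)

lemma bonus_cum: "bonus a eta gamma Act H = cum (\<lambda>h j. (eh h / (2 * a) + gh h) * real (card (Act h))) H"
  by (induction H) (auto simp: eh_def gh_def)

definition "wt1 h i = eh h * qh h i powr (2 - a) * loss h i / (ph h i + gh h)"
definition "wt2 h i = 2 * gh h"
definition "wt3 T b h i = (if i = b then 2 * gamma T else 0)"

lemma qpow_le: "qh h i powr (2 - a) \<le> qh h i"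
proof (cases "qh h i = 0")
  case True then show ?thesis by simp
next
  case False
  then have "0 < qh h i" using qh_nonneg[of h i] by simp
  then show ?thesis using powr_le_one_le[of "qh h i" "2 - a"] qh_le1 a1 by simp
qed

lemma wt1_term_le1:
  assumes "i \<in> Act h"
  shows "qh h i powr (2 - a) * loss h i / (ph h i + gh h) \<le> qh h i / ph h i"
proof -
  have pp: "0 < ph h i" using ph_pos[OF assms] .
  have "qh h i powr (2 - a) * loss h i \<le> qh h i * 1"
    using qpow_le[of h i] loss_act0[OF assms] loss_act1[OF assms] qh_nonneg[of h i]
    by (intro mult_mono) auto
  then have "qh h i powr (2 - a) * loss h i / (ph h i + gh h) \<le> qh h i / (ph h i + gh h)"
    using pp gh_pos[of h] by (intro divide_right_mono) auto
  also have "\<dots> \<le> qh h i / ph h i"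
    using pp gh_pos[of h] qh_nonneg[of h i] by (intro divide_left_mono) auto
  finally show ?thesis .
qed

lemma qp_eq: "i \<in> Act h \<Longrightarrow> qh h i / ph h i = Qh h"
  using ph_act[of i h] Qh_pos[of h] qh_pos[of i h] Act_lt[of i h] by simp

lemma wt1_ok: "i \<in> Act h \<Longrightarrow> 0 \<le> wt1 h i \<and> wt1 h i \<le> 2 * gh h"
proof
  assume i: "i \<in> Act h"
  have pg: "0 < ph h i + gh h" using ph_pos[OF i] gh_pos[of h] by simp
  show "0 \<le> wt1 h i" unfolding wt1_def using eh_pos[of h] loss_act0[OF i] pg by simp
  have "qh h i powr (2 - a) * loss h i / (ph h i + gh h) \<le> 1"
    using wt1_term_le1[OF i] qp_eq[OF i] Qh_le1[of h] by simp
  then have "wt1 h i \<le> eh h * 1" unfolding wt1_def using eh_pos[of h]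
    by (simp add: mult.assoc mult_left_le times_divide_eq_right[symmetric] del: times_divide_eq_right)
  then show "wt1 h i \<le> 2 * gh h" using eh_gh[of h] by simp
qed

lemma wt2_ok: "i \<in> Act h \<Longrightarrow> 0 \<le> wt2 h i \<and> wt2 h i \<le> 2 * gh h"
  unfolding wt2_def using gh_pos[of h] by simp

lemma gamma_anti: "1 \<le> t \<Longrightarrow> t \<le> s \<Longrightarrow> gamma s \<le> gamma t"
proof (induction s)
  case 0 then show ?case by simp
next
  case (Suc s)
  show ?case
  proof (cases "t = Suc s")
    case True then show ?thesis by simp
  next
    case False
    then have "t \<le> s" using Suc.prems by simp
    then show ?thesis using Suc.IH Suc.prems gamma_mono[of s] by simp
  qed
qed

lemma wt3_ok: "length h < T \<Longrightarrow> i \<in> Act h \<Longrightarrow> 0 \<le> wt3 T b h i \<and> wt3 T b h i \<le> 2 * gh h"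
  unfolding wt3_def gh_def using gamma_anti[of "Suc (length h)" T] gamma_pos[of T] by auto

end


context setting begin

lemma stb_bound:
  assumes j: "j \<in> Act h"
  shows "stb h j \<le> (eh h * real (card (Act h)) + Yw wt1 h j) / (2 * a)"
proof -
  define Z where "Z = qh h j powr (2 - a) * (loss h j / (ph h j + gh h))^2"
  have pg: "0 < ph h j + gh h" using ph_pos[OF j] gh_pos[of h] by simp
  have split: "(\<Sum>i<K. qh h i powr (2 - a) * (lt h j i)^2) =
     (\<Sum>i\<in>Act h. qh h i powr (2 - a) * (lt h j i)^2) + (\<Sum>i\<in>{..<K} - Act h. qh h i powr (2 - a) * (lt h j i)^2)"
    using sum.subset_diff[OF Act_sub[of h] finite_lessThan, of "\<lambda>i. qh h i powr (2 - a) * (lt h j i)^2"]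
    by (simp add: add.commute)
  have A: "(\<Sum>i\<in>Act h. qh h i powr (2 - a) * (lt h j i)^2) = Z"
  proof -
    have "(\<Sum>i\<in>Act h. qh h i powr (2 - a) * (lt h j i)^2) = (\<Sum>i\<in>Act h. if i = j then Z else 0)"
      by (intro sum.cong refl) (simp add: lt_act ltil_act_def Z_def)
    then show ?thesis using j Act_fin by simp
  qed
  have B: "(\<Sum>i\<in>{..<K} - Act h. qh h i powr (2 - a) * (lt h j i)^2) \<le> 1 - Qh h"
  proof -
    have "(\<Sum>i\<in>{..<K} - Act h. qh h i powr (2 - a) * (lt h j i)^2) \<le> (\<Sum>i\<in>{..<K} - Act h. qh h i * 1)"
    proof (intro sum_mono mult_mono)
      fix i assume i: "i \<in> {..<K} - Act h"
      show "qh h i powr (2 - a) \<le> qh h i" by (rule qpow_le)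
      have "0 \<le> lt h j i" "lt h j i \<le> 1" using lt_nonneg[OF j] lt_nact_le1[OF j] i by auto
      then show "(lt h j i)^2 \<le> 1" by (simp add: power_le_one)
      show "0 \<le> qh h i" by (rule qh_nonneg)
      show "0 \<le> (lt h j i)^2" by simp
    qed
    then show ?thesis using Qh_split[of h] by simp
  qed
  have Y1: "Yw wt1 h j = eh h * Z - (\<Sum>i\<in>Act h. wt1 h i * loss h i)"
    unfolding Yw_eq[OF j] wt1_def Z_def using pg by (simp add: power2_eq_square)
  have W: "(\<Sum>i\<in>Act h. wt1 h i * loss h i) \<le> (\<Sum>i\<in>Act h. eh h * Qh h)"
  proof (intro sum_mono)
    fix i assume i: "i \<in> Act h"
    have t: "qh h i powr (2 - a) * loss h i / (ph h i + gh h) \<le> Qh h"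
      using wt1_term_le1[OF i] qp_eq[OF i] by simp
    have t0: "0 \<le> qh h i powr (2 - a) * loss h i / (ph h i + gh h)"
      using loss_act0[OF i] ph_pos[OF i] gh_pos[of h] by simp
    have "qh h i powr (2 - a) * loss h i / (ph h i + gh h) * loss h i \<le> Qh h * 1"
      using t t0 loss_act0[OF i] loss_act1[OF i] Qh_pos[of h] by (intro mult_mono) auto
    then have "eh h * (qh h i powr (2 - a) * loss h i / (ph h i + gh h) * loss h i) \<le> eh h * Qh h"
      using eh_pos[of h] by (intro mult_left_mono) auto
    then show "wt1 h i * loss h i \<le> eh h * Qh h" unfolding wt1_def by (simp add: algebra_simps)
  qed
  have eZ: "eh h * Z \<le> Yw wt1 h j + eh h * Qh h * real (card (Act h))"
    using Y1 W by (simp add: ac_simps)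
  have c1: "1 \<le> real (card (Act h))" using card_Act[of h] by simp
  have "(1 - Qh h) * (real (card (Act h)) - 1) \<ge> 0" using Qh_le1[of h] c1 by simp
  then have cq: "Qh h * real (card (Act h)) + (1 - Qh h) \<le> real (card (Act h))"
    by (simp add: algebra_simps)
  have "stb h j \<le> eh h / (2 * a) * (Z + (1 - Qh h))"
    unfolding stb_def split A using B eh_pos[of h] a0 by (intro mult_left_mono) auto
  also have "\<dots> = (eh h * Z + eh h * (1 - Qh h)) / (2 * a)" using a0 by (simp add: field_simps)
  also have "\<dots> \<le> (Yw wt1 h j + eh h * (Qh h * real (card (Act h)) + (1 - Qh h))) / (2 * a)"
    using eZ a0 by (intro divide_right_mono) (auto simp: algebra_simps)
  also have "\<dots> \<le> (Yw wt1 h j + eh h * real (card (Act h))) / (2 * a)"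
    using cq eh_pos[of h] a0 by (intro divide_right_mono add_left_mono mult_left_mono) auto
  finally show ?thesis by (simp add: add.commute)
qed

lemma gS_bound:
  assumes j: "j \<in> Act h"
  shows "gh h * Sh h j \<le> Yw wt2 h j / 2 + gh h * real (card (Act h))"
proof -
  have "Yw wt2 h j = 2 * (gh h * Sh h j) - 2 * (gh h * (\<Sum>i\<in>Act h. loss h i))"
    unfolding Yw_eq[OF j] wt2_def Sh_eq[OF j] by (simp add: sum_distrib_left algebra_simps)
  moreover have "(\<Sum>i\<in>Act h. loss h i) \<le> (\<Sum>i\<in>Act h. 1)"
    using loss_act1 by (intro sum_mono) auto
  then have "gh h * (\<Sum>i\<in>Act h. loss h i) \<le> gh h * real (card (Act h))"
    using gh_pos[of h] by (intro mult_left_mono) auto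
  ultimately show ?thesis by linarith
qed

lemma r_bound:
  assumes j: "j \<in> Act h" and gT: "0 < gamma T"
  shows "(if b \<in> Act h then loss h j - loss h b else 0)
     \<le> lin h j - lt h j b + gh h * Sh h j + Yw (wt3 T b) h j / (2 * gamma T)"
proof (cases "b \<in> Act h")
  case True
  have "Yw (wt3 T b) h j = 2 * gamma T * (lt h j b - loss h b)"
  proof -
    have "(\<Sum>i\<in>Act h. wt3 T b h i * loss h i) = (\<Sum>i\<in>Act h. if i = b then 2 * gamma T * loss h b else 0)"
      by (intro sum.cong refl) (simp add: wt3_def)
    also have "\<dots> = 2 * gamma T * loss h b" using True Act_fin by simp
    finally show ?thesis
      unfolding Yw_eq[OF j] lt_act[OF True] ltil_act_def wt3_def by (auto simp: algebra_simps)
  qed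
  then have "Yw (wt3 T b) h j / (2 * gamma T) = lt h j b - loss h b" using gT by simp
  then show ?thesis using True lin_eq[OF j] unfolding lin_def by simp
next
  case False
  have "Yw (wt3 T b) h j = 0"
  proof -
    have "(\<Sum>i\<in>Act h. wt3 T b h i * loss h i) = 0"
      using False by (intro sum.neutral) (auto simp: wt3_def)
    moreover have "b \<noteq> j" using False j by auto
    ultimately show ?thesis unfolding Yw_eq[OF j] wt3_def by simp
  qed
  then show ?thesis using False lin_eq[OF j] lt_nact[OF False, of j] gh_pos[of h] Sh_nonneg[OF j]
    unfolding lin_def by simp
qed

lemma round_ineq:
  assumes j: "j \<in> Act h" and gT: "0 < gamma T"
  shows "(if b \<in> Act h then loss h j - loss h b else 0)
     \<le> lin h j - stb h j - lt h j b + (eh h / (2 * a) + gh h) * real (card (Act h))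
        + Yw wt1 h j / (2 * a) + Yw wt2 h j / 2 + Yw (wt3 T b) h j / (2 * gamma T)"
proof -
  have s: "stb h j \<le> eh h * real (card (Act h)) / (2 * a) + Yw wt1 h j / (2 * a)"
    using stb_bound[OF j] by (simp add: add_divide_distrib)
  have e: "(eh h / (2 * a) + gh h) * real (card (Act h)) = eh h * real (card (Act h)) / (2 * a) + gh h * real (card (Act h))"
    by (simp add: algebra_simps)
  show ?thesis using r_bound[OF j gT, of b] gS_bound[OF j] s unfolding e by linarith
qed

lemma cum_comb:
  "cum (\<lambda>h j. f1 h j - f2 h j - f3 h j + f4 h j + f5 h j / c1 + f6 h j / c2 + f7 h j / c3) H
   = cum f1 H - cum f2 H - cum f3 H + cum f4 H + cum f5 H / c1 + cum f6 H / c2 + cum f7 H / c3"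
  by (induction H) (simp_all add: add_divide_distrib diff_divide_distrib algebra_simps)

lemma pathwise:
  assumes v: "valid Act H" and len: "length H = T" and T1: "1 \<le> T" and b: "b < K"
    and E1: "cum (Yw wt1) H < c1" and E2: "cum (Yw wt2) H < c1" and E3: "cum (Yw (wt3 T b)) H < c3"
  shows "regret Act loss b H \<le> (real K powr (1 - a) - 1) / (eta T * (1 - a))
     + c3 / (2 * gamma T) + (1 / (2 * a) + 1 / 2) * c1 + bonus a eta gamma Act H"
proof -
  have gT: "0 < gamma T" using gamma_pos T1 by simp
  obtain j h where H: "H = j # h" using len T1 by (cases H) auto
  have "regret Act loss b H \<le> cum (\<lambda>h j. lin h j - stb h j - lt h j b + (eh h / (2 * a) + gh h) * real (card (Act h))
        + Yw wt1 h j / (2 * a) + Yw wt2 h j / 2 + Yw (wt3 T b) h j / (2 * gamma T)) H"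
    unfolding regret_cum by (rule cum_mono[OF v round_ineq[OF _ gT]])
  also have "\<dots> = cum lin H - cum stb H - Lh H b + bonus a eta gamma Act H
        + cum (Yw wt1) H / (2 * a) + cum (Yw wt2) H / 2 + cum (Yw (wt3 T b)) H / (2 * gamma T)"
    unfolding cum_comb Lh_cum bonus_cum ..
  finally have r: "regret Act loss b H \<le> cum lin H - cum stb H - Lh H b + bonus a eta gamma Act H
        + cum (Yw wt1) H / (2 * a) + cum (Yw wt2) H / 2 + cum (Yw (wt3 T b)) H / (2 * gamma T)" .
  define e where "e = (\<lambda>i. if i = b then 1 else (0::real))"
  have es: "e \<in> simplex K" unfolding e_def simplex_def using b by auto
  have "cum lin H - cum stb H \<le> Fo a K (eh h) (Lh H) e"
    using ftrl_cum[of j h e] v es unfolding H by simp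
  also have "\<dots> = reg a K (eta T) e + Lh H b"
  proof -
    have "(\<Sum>i<K. e i * Lh H i) = (\<Sum>i<K. if i = b then Lh H b else 0)"
      by (intro sum.cong) (auto simp: e_def)
    then have "(\<Sum>i<K. e i * Lh H i) = Lh H b" using b by simp
    moreover have "eh h = eta T" unfolding eh_def using len H by simp
    ultimately show ?thesis unfolding Fo_def by simp
  qed
  also have "reg a K (eta T) e \<le> (real K powr (1 - a) - 1) / (eta T * (1 - a))"
    unfolding e_def using reg_vertex[OF b] eta_pos T1 by simp
  finally have f: "cum lin H - cum stb H \<le> (real K powr (1 - a) - 1) / (eta T * (1 - a)) + Lh H b" by simp
  have d1: "cum (Yw wt1) H / (2 * a) \<le> c1 / (2 * a)" using E1 a0 by (intro divide_right_mono) auto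
  have d2: "cum (Yw wt2) H / 2 \<le> c1 / 2" using E2 by simp
  have d3: "cum (Yw (wt3 T b)) H / (2 * gamma T) \<le> c3 / (2 * gamma T)" using E3 gT by (intro divide_right_mono) auto
  have "(1 / (2 * a) + 1 / 2) * c1 = c1 / (2 * a) + c1 / 2" by (simp add: algebra_simps)
  then show ?thesis using r f d1 d2 d3 by linarith
qed

end


context setting begin

lemma markov_wt:
  assumes wt: "\<And>h i. length h < T \<Longrightarrow> i \<in> Act h \<Longrightarrow> 0 \<le> wt h i \<and> wt h i \<le> 2 * gh h"
    and x: "0 < x"
  shows "hist_prob K T w (\<lambda>H. ln x \<le> cum (Yw wt) H) \<le> 1 / x"
proof -
  have "hist_prob K T w (\<lambda>H. ln x \<le> cum (Yw wt) H) \<le> exp (- ln x)"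
    by (rule markov) (use neu_round wt in blast)
  also have "exp (- ln x) = 1 / x" using x by (simp add: exp_minus inverse_eq_divide)
  finally show ?thesis .
qed

theorem main_loc:
  assumes T1: "1 \<le> T" and d0: "0 < \<delta>" and d1: "\<delta> < 1"
  shows "hist_prob K T w
     (\<lambda>H. Max ((\<lambda>b. regret Act loss b H) ` {..<K})
        \<le> (real K powr (1 - a) - 1) / (eta T * (1 - a))
          + ln (3 * real K / \<delta>) / (2 * gamma T)
          + (1 / (2 * a) + 1 / 2) * ln (3 / \<delta>)
          + bonus a eta gamma Act H)
    \<ge> 1 - \<delta>"
proof -
  define c where "c = ln (3 / \<delta>)"
  define c3 where "c3 = ln (3 * real K / \<delta>)"
  define G where "G = (\<lambda>H. Max ((\<lambda>b. regret Act loss b H) ` {..<K})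
        \<le> (real K powr (1 - a) - 1) / (eta T * (1 - a))
          + ln (3 * real K / \<delta>) / (2 * gamma T)
          + (1 / (2 * a) + 1 / 2) * ln (3 / \<delta>)
          + bonus a eta gamma Act H)"
  define B1 where "B1 = (\<lambda>H. c \<le> cum (Yw wt1) H)"
  define B2 where "B2 = (\<lambda>H. c \<le> cum (Yw wt2) H)"
  define B3 where "B3 = (\<lambda>b H. c3 \<le> cum (Yw (wt3 T b)) H)"
  define ind where "ind = (\<lambda>P. if P then 1 else (0::real))"
  have Kp: "0 < real K" using K1 by simp
  have p1: "hist_prob K T w B1 \<le> \<delta> / 3"
    using markov_wt[where T=T and wt=wt1 and x="3 / \<delta>"] wt1_ok d0 unfolding B1_def c_def by simp
  have p2: "hist_prob K T w B2 \<le> \<delta> / 3"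
    using markov_wt[where T=T and wt=wt2 and x="3 / \<delta>"] wt2_ok d0 unfolding B2_def c_def by simp
  have p3: "\<And>b. hist_prob K T w (B3 b) \<le> \<delta> / (3 * real K)"
    using markov_wt[where T=T and wt="wt3 T b" and x="3 * real K / \<delta>" for b] wt3_ok d0 Kp unfolding B3_def c3_def by simp
  have pw: "w H * ind (G H) \<ge> w H * (1 - (ind (B1 H) + ind (B2 H) + (\<Sum>b<K. ind (B3 b H))))"
    if H: "H \<in> Hs K T" for H
  proof (cases "w H = 0")
    case True then show ?thesis by simp
  next
    case False
    then have v: "valid Act H" by (rule w_valid)
    have len: "length H = T" using H unfolding Hs_def by simp
    have s0: "0 \<le> ind (B1 H) + ind (B2 H) + (\<Sum>b<K. ind (B3 b H))"
      unfolding ind_def by (intro add_nonneg_nonneg sum_nonneg) auto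
    show ?thesis
    proof (cases "B1 H \<or> B2 H \<or> (\<exists>b<K. B3 b H)")
      case True
      have "1 \<le> ind (B1 H) + ind (B2 H) + (\<Sum>b<K. ind (B3 b H))"
      proof -
        have i0: "0 \<le> ind (B1 H)" "0 \<le> ind (B2 H)" "0 \<le> (\<Sum>b<K. ind (B3 b H))"
          unfolding ind_def by (auto intro: sum_nonneg)
        { assume "\<exists>b<K. B3 b H"
          then obtain b where "b < K" "B3 b H" by blast
          then have "ind (B3 b H) \<le> (\<Sum>b<K. ind (B3 b H))"
            by (intro member_le_sum) (auto simp: ind_def)
          then have "1 \<le> (\<Sum>b<K. ind (B3 b H))" using \<open>B3 b H\<close> by (simp add: ind_def) }
        then show ?thesis using True i0 unfolding ind_def by auto
      qed
      then have "w H * (1 - (ind (B1 H) + ind (B2 H) + (\<Sum>b<K. ind (B3 b H)))) \<le> w H * 0"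
        using w_nonneg[of H] by (intro mult_left_mono) auto
      also have "\<dots> \<le> w H * ind (G H)" using w_nonneg[of H] by (simp add: ind_def)
      finally show ?thesis .
    next
      case False
      have all: "\<forall>b<K. regret Act loss b H \<le> (real K powr (1 - a) - 1) / (eta T * (1 - a))
          + ln (3 * real K / \<delta>) / (2 * gamma T) + (1 / (2 * a) + 1 / 2) * ln (3 / \<delta>)
          + bonus a eta gamma Act H"
      proof (intro allI impI)
        fix b assume b: "b < K"
        have "cum (Yw wt1) H < c" "cum (Yw wt2) H < c" "cum (Yw (wt3 T b)) H < c3"
          using False b unfolding B1_def B2_def B3_def by auto
        from pathwise[OF v len T1 b this] show "regret Act loss b H \<le> (real K powr (1 - a) - 1) / (eta T * (1 - a))
          + ln (3 * real K / \<delta>) / (2 * gamma T) + (1 / (2 * a) + 1 / 2) * ln (3 / \<delta>)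
          + bonus a eta gamma Act H" unfolding c_def c3_def .
      qed
      have "0 \<in> {..<K}" using K1 by simp
      then have ne: "(\<lambda>b. regret Act loss b H) ` {..<K} \<noteq> {}" by blast
      have "G H" unfolding G_def using all by (subst Max_le_iff[OF _ ne]) auto
      then have "ind (G H) = 1" by (simp add: ind_def)
      moreover have "w H * (1 - (ind (B1 H) + ind (B2 H) + (\<Sum>b<K. ind (B3 b H)))) \<le> w H * 1"
        using s0 w_nonneg[of H] by (intro mult_left_mono) auto
      ultimately show ?thesis by simp
    qed
  qed
  have "(\<Sum>H\<in>Hs K T. w H * (1 - (ind (B1 H) + ind (B2 H) + (\<Sum>b<K. ind (B3 b H)))))
      = (\<Sum>H\<in>Hs K T. w H) - (\<Sum>H\<in>Hs K T. w H * ind (B1 H)) - (\<Sum>H\<in>Hs K T. w H * ind (B2 H))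
        - (\<Sum>b<K. \<Sum>H\<in>Hs K T. w H * ind (B3 b H))"
    by (simp add: algebra_simps sum_subtractf sum.distrib sum_distrib_left sum.swap[of _ "{..<K}"])
  also have "\<dots> = 1 - hist_prob K T w B1 - hist_prob K T w B2 - (\<Sum>b<K. hist_prob K T w (B3 b))"
    unfolding hist_prob_Hs total_w ind_def ..
  also have "\<dots> \<ge> 1 - \<delta> / 3 - \<delta> / 3 - (\<Sum>b<K. \<delta> / (3 * real K))"
  proof -
    have s3: "(\<Sum>b<K. hist_prob K T w (B3 b)) \<le> (\<Sum>b<K. \<delta> / (3 * real K))"
      by (intro sum_mono p3)
    show ?thesis using p1 p2 s3 by linarith
  qed
  also have "(\<Sum>b<K. \<delta> / (3 * real K)) = \<delta> / 3" using Kp by simp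
  finally have "1 - \<delta> \<le> (\<Sum>H\<in>Hs K T. w H * (1 - (ind (B1 H) + ind (B2 H) + (\<Sum>b<K. ind (B3 b H)))))"
    by simp
  also have "\<dots> \<le> (\<Sum>H\<in>Hs K T. w H * ind (G H))" by (intro sum_mono pw)
  also have "\<dots> = hist_prob K T w G" unfolding hist_prob_Hs ind_def ..
  finally show ?thesis unfolding G_def .
qed

end

theorem theoremD1:
  fixes K T :: nat and \<alpha> \<delta> :: real and eta gamma :: "nat \<Rightarrow> real"
    and Act :: "nat list \<Rightarrow> nat set" and loss :: "nat list \<Rightarrow> nat \<Rightarrow> real"
  assumes "K \<ge> 2" and "T \<ge> 1" and "0 < \<alpha>" and "\<alpha> < 1" and "0 < \<delta>" and "\<delta> < 1"
    and "\<forall>t\<ge>1. 0 < eta t" and "\<forall>t\<ge>1. 0 < gamma t"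
    and "\<forall>t\<ge>1. eta (Suc t) \<le> eta t" and "\<forall>t\<ge>1. gamma (Suc t) \<le> gamma t"
    and "\<forall>t\<ge>1. eta t \<le> 2 * gamma t"
    and "\<forall>h. Act h \<subseteq> {..<K} \<and> Act h \<noteq> {}"
    and "\<forall>h i. i < K \<longrightarrow> 0 \<le> loss h i \<and> loss h i \<le> 1"
  shows "hist_prob K T (ftarl_weight \<alpha> K eta gamma Act loss)
     (\<lambda>H. Max ((\<lambda>a. regret Act loss a H) ` {..<K})
        \<le> (real K powr (1 - \<alpha>) - 1) / (eta T * (1 - \<alpha>))
          + ln (3 * real K / \<delta>) / (2 * gamma T)
          + (1 / (2 * \<alpha>) + 1 / 2) * ln (3 / \<delta>)
          + bonus \<alpha> eta gamma Act H)
    \<ge> 1 - \<delta>"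
  proof -
  interpret setting \<alpha> K eta gamma Act loss
    by unfold_locales (use assms in auto)
  show ?thesis using main_loc[of T \<delta>] assms by simp
qed

end
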